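(* $\mathrm{L\text{-}ESO}_{d[0,1]}[=,\mathrm{SUM}]\equiv_{\mathbb R}\mathrm{L\text{-}ESO}_{d[0,1]}[=,\mathrm{SUM},0,1]$. The same equivalence holds when both logics are restricted to almost conjunctive $\ddot\exists^*\forall^*$-formulae.
   Context: Conventions on structures and $\mathrm{ESO}_{\mathbb R}$. Let $\tau$ be a finite relational vocabulary and $\sigma$ a finite functional vocabulary. An $\mathbb R$-structure of vocabulary $\tau\cup\sigma$ is a tuple $\mathfrak A=(A,\mathbb R,(R^{\mathfrak A})_{R\in\tau},(g^{\mathfrak A})_{g\in\sigma})$ where $A$ is a finite set with at least two elements, each $R^{\mathfrak A}\subseteq A^{\mathrm{ar}(R)}$ and each $g^{\mathfrak A}\colon A^{\mathrm{ar}(g)}\to\mathbb R$. For $S\subseteq\mathbb R$, $\mathfrak A$ is an $S$-structure if every $g^{\mathfrak A}$ takes values in $S$, and a $d[0,1]$-structure if every $g^{\mathfrak A}$ is a probability distribution on $A^{\mathrm{ar}(g)}$. If $\sigma=\emptyset$, $\mathfrak A$ is a finite structure. Numerical terms are built by $i::=c\mid f(\vec x)\mid i+i\mid i\times i\mid \mathrm{SUM}_{\vec y}\,i$, where $c\in\mathbb R$ is a constant, $f$ is a function symbol or function variable, and $\vec x,\vec y$ are tuples of first-order variables; under an assignment $s$, $f(\vec x)$ denotes $f^{\mathfrak A}(s(\vec x))$, $+,\times$ are real addition and multiplication, and $\mathrm{SUM}_{\vec y}\,i$ denotes $\sum_{\vec a\in A^{|\vec y|}}[i]_{s[\vec a/\vec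 y]}$ (the variables $\vec y$ become bound). For $O\subseteq\{+,\times,\mathrm{SUM}\}$, $E\subseteq\{=,<,\le\}$, $C\subseteq\mathbb R$, the formulae of $\mathrm{ESO}_{\mathbb R}[O,E,C]$ are given by $\phi::= x=y\mid\neg x=y\mid i\,e\,j\mid\neg\, i\,e\,j\mid R(\vec x)\mid\neg R(\vec x)\mid\phi\wedge\phi\mid\phi\vee\phi\mid\exists x\phi\mid\forall x\phi\mid\exists f\phi$, where $i,j$ are numerical terms using only operations in $O$ and constants in $C$, $e\in E$, $R\in\tau$, and $f$ is a function variable. Semantics is Tarskian: first-order variables range over $A$ and $\exists f$ ranges over all functions $A^{\mathrm{ar}(f)}\to\mathbb R$. For $S\subseteq\mathbb R$, $\mathrm{ESO}_S[O,E,C]$ has the same syntax but $\exists f$ ranges over functions $A^{\mathrm{ar}(f)}\to S$; in $\mathrm{ESO}_{d[0,1]}[O,E,C]$, $\exists f$ ranges over probability distributions on $A^{\mathrm{ar}(f)}$. Free function variables are interpreted like symbols of $\sigma$. We list the elements of $O,E,C$ together in brackets, e.g. $\mathrm{ESO}_{\mathbb R}[\le,+,\mathrm{SUM},0,1]$ means $O=\{+,\mathrm{SUM}\}$, $E=\{\le\}$, $C=\{0,1\}$. Fragments. The loose fragment $\mathrm{L\text{-}ESO}_S[O,E,C]$ of $\mathrm{ESO}_S[O,E,C]$ ($S$ a set of reals or $d[0,1]$) consists of the formulae containing no negated numerical atom $\neg\, i\,e\,j$. A formula is almost conjunctive if for every subformula $(\psi_1\vee\psi_2)$, at least one of $\psi_1,\psi_2$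 contains no numerical term. For a regular expression $L$ over $\{\ddot\exists,\exists,\forall\}$, the $L$-formulae of a logic are those in prenex form whose quantifier prefix belongs to $L$, where $\ddot\exists$ stands for an existential function quantifier and $\exists,\forall$ for first-order quantifiers (e.g. $\ddot\exists^*\forall^*$). Expressivity. For a formula $\phi$ and $X\subseteq\mathbb R$ or $X=d[0,1]$, $\mathrm{Struc}_X(\phi)$ is the class of pairs $(\mathfrak A,s)$ with $\mathfrak A$ an $X$-structure and $s$ an assignment of the free first-order variables such that $\mathfrak A\models_s\phi$. For logics $\mathcal L,\mathcal L'$, $\mathcal L\le_X\mathcal L'$ means every $\phi\in\mathcal L$ has some $\psi\in\mathcal L'$ with $\mathrm{Struc}_X(\phi)=\mathrm{Struc}_X(\psi)$; $\equiv_X$ means $\le_X$ in both directions. *)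

theory Defs
  imports Main "HOL.Real"
begin

text \<open>Elements of structures are natural numbers: every finite
structure is isomorphic to one whose universe is a finite set of naturals.\<close>

type_synonym var = nat

datatype cmp = CEq | CLt | CLe

datatype op = OPlus | OTimes | OSum

datatype nterm =
    Const real
  | FApp nat "var list"
  | Plus nterm nterm
  | Times nterm nterm
  | Sum "var list" nterm

datatype formula =
    Eq var var
  | NEq var var
  | NumAt cmp nterm nterm
  | NegNumAt cmp nterm nterm
  | Rel nat "var list"
  | NRel nat "var list"
  | And formula formula
  | Or formula formula
  | Ex var formula
  | All var formula
  | ExF nat nat formula  \<comment> \<open>\<open>ExF f k \<phi>\<close>: exists function variable f of arity k\<close>

record struc =
  univ :: "nat set"
  rel :: "nat \<Rightarrow> nat list set"
  fn :: "nat \<Rightarrow> nat list \<Rightarrow> real"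

definition tuples :: "nat set \<Rightarrow> nat \<Rightarrow> nat list set" where
  "tuples A n = {as. length as = n \<and> set as \<subseteq> A}"

text \<open>A vocabulary: arities of relation symbols and of function symbols
(\<open>None\<close> = not in the vocabulary).\<close>
type_synonym vocab = "(nat \<Rightarrow> nat option) \<times> (nat \<Rightarrow> nat option)"

definition finite_vocab :: "vocab \<Rightarrow> bool" where
  "finite_vocab V \<longleftrightarrow> finite (dom (fst V)) \<and> finite (dom (snd V))"

text \<open>\<open>\<real>\<close>-structures of a vocabulary, in canonical representation (relations and
functions are given exactly on the appropriate tuples; everything else is empty / 0).\<close>
definition is_struc :: "vocab \<Rightarrow> struc \<Rightarrow> bool" where
  "is_struc V S \<longleftrightarrow>
     finite (univ S) \<and> card (univ S) \<ge> 2 \<and>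
     (\<forall>R. case fst V R of
            None \<Rightarrow> rel S R = {}
          | Some k \<Rightarrow> rel S R \<subseteq> tuples (univ S) k) \<and>
     (\<forall>f. case snd V f of
            None \<Rightarrow> fn S f = (\<lambda>_. 0)
          | Some k \<Rightarrow> (\<forall>v. v \<notin> tuples (univ S) k \<longrightarrow> fn S f v = 0))"

definition upd :: "(var \<Rightarrow> nat) \<Rightarrow> var list \<Rightarrow> nat list \<Rightarrow> var \<Rightarrow> nat" where
  "upd s ys as = (\<lambda>x. case map_of (zip ys as) x of Some a \<Rightarrow> a | None \<Rightarrow> s x)"

primrec teval :: "nat set \<Rightarrow> (nat \<Rightarrow> nat list \<Rightarrow> real) \<Rightarrow> (var \<Rightarrow> nat) \<Rightarrow> nterm \<Rightarrow> real" where
  "teval A F s (Const c) = c"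
| "teval A F s (FApp f xs) = F f (map s xs)"
| "teval A F s (Plus i j) = teval A F s i + teval A F s j"
| "teval A F s (Times i j) = teval A F s i * teval A F s j"
| "teval A F s (Sum ys i) = (\<Sum>as\<in>tuples A (length ys). teval A F (upd s ys as) i)"

fun cmp_sem :: "cmp \<Rightarrow> real \<Rightarrow> real \<Rightarrow> bool" where
  "cmp_sem CEq a b = (a = b)"
| "cmp_sem CLt a b = (a < b)"
| "cmp_sem CLe a b = (a \<le> b)"

definition is_distr :: "nat set \<Rightarrow> nat \<Rightarrow> (nat list \<Rightarrow> real) \<Rightarrow> bool" where
  "is_distr A k g \<longleftrightarrow>
     (\<forall>v\<in>tuples A k. g v \<ge> 0) \<and> (\<Sum>v\<in>tuples A k. g v) = 1 \<and>
     (\<forall>v. v \<notin> tuples A k \<longrightarrow> g v = 0)"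

primrec sat_d :: "struc \<Rightarrow> (var \<Rightarrow> nat) \<Rightarrow> formula \<Rightarrow> bool" where
  "sat_d S s (Eq x y) = (s x = s y)"
| "sat_d S s (NEq x y) = (s x \<noteq> s y)"
| "sat_d S s (NumAt c i j) = cmp_sem c (teval (univ S) (fn S) s i) (teval (univ S) (fn S) s j)"
| "sat_d S s (NegNumAt c i j) = (\<not> cmp_sem c (teval (univ S) (fn S) s i) (teval (univ S) (fn S) s j))"
| "sat_d S s (Rel R xs) = (map s xs \<in> rel S R)"
| "sat_d S s (NRel R xs) = (map s xs \<notin> rel S R)"
| "sat_d S s (And \<phi> \<psi>) = (sat_d S s \<phi> \<and> sat_d S s \<psi>)"
| "sat_d S s (Or \<phi> \<psi>) = (sat_d S s \<phi> \<or> sat_d S s \<psi>)"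
| "sat_d S s (Ex x \<phi>) = (\<exists>a\<in>univ S. sat_d S (s(x := a)) \<phi>)"
| "sat_d S s (All x \<phi>) = (\<forall>a\<in>univ S. sat_d S (s(x := a)) \<phi>)"
| "sat_d S s (ExF f k \<phi>) =
     (\<exists>g. is_distr (univ S) k g \<and> sat_d (S\<lparr>fn := (fn S)(f := g)\<rparr>) s \<phi>)"

primrec wf_term :: "(nat \<Rightarrow> nat option) \<Rightarrow> nterm \<Rightarrow> bool" where
  "wf_term ar (Const c) = True"
| "wf_term ar (FApp f xs) = (ar f = Some (length xs))"
| "wf_term ar (Plus i j) = (wf_term ar i \<and> wf_term ar j)"
| "wf_term ar (Times i j) = (wf_term ar i \<and> wf_term ar j)"
| "wf_term ar (Sum ys i) = (distinct ys \<and> wf_term ar i)"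

primrec wf_form :: "(nat \<Rightarrow> nat option) \<Rightarrow> (nat \<Rightarrow> nat option) \<Rightarrow> formula \<Rightarrow> bool" where
  "wf_form rv ar (Eq x y) = True"
| "wf_form rv ar (NEq x y) = True"
| "wf_form rv ar (NumAt c i j) = (wf_term ar i \<and> wf_term ar j)"
| "wf_form rv ar (NegNumAt c i j) = (wf_term ar i \<and> wf_term ar j)"
| "wf_form rv ar (Rel R xs) = (rv R = Some (length xs))"
| "wf_form rv ar (NRel R xs) = (rv R = Some (length xs))"
| "wf_form rv ar (And \<phi> \<psi>) = (wf_form rv ar \<phi> \<and> wf_form rv ar \<psi>)"
| "wf_form rv ar (Or \<phi> \<psi>) = (wf_form rv ar \<phi> \<and> wf_form rv ar \<psi>)"
| "wf_form rv ar (Ex x \<phi>) = wf_form rv ar \<phi>"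
| "wf_form rv ar (All x \<phi>) = wf_form rv ar \<phi>"
| "wf_form rv ar (ExF f k \<phi>) = wf_form rv (ar(f := Some k)) \<phi>"

definition wf :: "vocab \<Rightarrow> formula \<Rightarrow> bool" where
  "wf V \<phi> = wf_form (fst V) (snd V) \<phi>"

primrec term_in :: "op set \<Rightarrow> real set \<Rightarrow> nterm \<Rightarrow> bool" where
  "term_in Ops C (Const c) = (c \<in> C)"
| "term_in Ops C (FApp f xs) = True"
| "term_in Ops C (Plus i j) = (OPlus \<in> Ops \<and> term_in Ops C i \<and> term_in Ops C j)"
| "term_in Ops C (Times i j) = (OTimes \<in> Ops \<and> term_in Ops C i \<and> term_in Ops C j)"
| "term_in Ops C (Sum ys i) = (OSum \<in> Ops \<and> term_in Ops C i)"

primrec in_ESO :: "op set \<Rightarrow> cmp set \<Rightarrow> real set \<Rightarrow> formula \<Rightarrow> bool" where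
  "in_ESO Ops E C (Eq x y) = True"
| "in_ESO Ops E C (NEq x y) = True"
| "in_ESO Ops E C (NumAt c i j) = (c \<in> E \<and> term_in Ops C i \<and> term_in Ops C j)"
| "in_ESO Ops E C (NegNumAt c i j) = (c \<in> E \<and> term_in Ops C i \<and> term_in Ops C j)"
| "in_ESO Ops E C (Rel R xs) = True"
| "in_ESO Ops E C (NRel R xs) = True"
| "in_ESO Ops E C (And \<phi> \<psi>) = (in_ESO Ops E C \<phi> \<and> in_ESO Ops E C \<psi>)"
| "in_ESO Ops E C (Or \<phi> \<psi>) = (in_ESO Ops E C \<phi> \<and> in_ESO Ops E C \<psi>)"
| "in_ESO Ops E C (Ex x \<phi>) = in_ESO Ops E C \<phi>"
| "in_ESO Ops E C (All x \<phi>) = in_ESO Ops E C \<phi>"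
| "in_ESO Ops E C (ExF f k \<phi>) = in_ESO Ops E C \<phi>"

primrec loose :: "formula \<Rightarrow> bool" where
  "loose (Eq x y) = True"
| "loose (NEq x y) = True"
| "loose (NumAt c i j) = True"
| "loose (NegNumAt c i j) = False"
| "loose (Rel R xs) = True"
| "loose (NRel R xs) = True"
| "loose (And \<phi> \<psi>) = (loose \<phi> \<and> loose \<psi>)"
| "loose (Or \<phi> \<psi>) = (loose \<phi> \<and> loose \<psi>)"
| "loose (Ex x \<phi>) = loose \<phi>"
| "loose (All x \<phi>) = loose \<phi>"
| "loose (ExF f k \<phi>) = loose \<phi>"

primrec has_num :: "formula \<Rightarrow> bool" where
  "has_num (Eq x y) = False"
| "has_num (NEq x y) = False"
| "has_num (NumAt c i j) = True"
| "has_num (NegNumAt c i j) = True"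
| "has_num (Rel R xs) = False"
| "has_num (NRel R xs) = False"
| "has_num (And \<phi> \<psi>) = (has_num \<phi> \<or> has_num \<psi>)"
| "has_num (Or \<phi> \<psi>) = (has_num \<phi> \<or> has_num \<psi>)"
| "has_num (Ex x \<phi>) = has_num \<phi>"
| "has_num (All x \<phi>) = has_num \<phi>"
| "has_num (ExF f k \<phi>) = has_num \<phi>"

primrec almost_conj :: "formula \<Rightarrow> bool" where
  "almost_conj (Eq x y) = True"
| "almost_conj (NEq x y) = True"
| "almost_conj (NumAt c i j) = True"
| "almost_conj (NegNumAt c i j) = True"
| "almost_conj (Rel R xs) = True"
| "almost_conj (NRel R xs) = True"
| "almost_conj (And \<phi> \<psi>) = (almost_conj \<phi> \<and> almost_conj \<psi>)"
| "almost_conj (Or \<phi> \<psi>) = ((\<not> has_num \<phi> \<or> \<not> has_num \<psi>) \<and> almost_conj \<phi> \<and> almost_conj \<psi>)"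
| "almost_conj (Ex x \<phi>) = almost_conj \<phi>"
| "almost_conj (All x \<phi>) = almost_conj \<phi>"
| "almost_conj (ExF f k \<phi>) = almost_conj \<phi>"

primrec qfree :: "formula \<Rightarrow> bool" where
  "qfree (Eq x y) = True"
| "qfree (NEq x y) = True"
| "qfree (NumAt c i j) = True"
| "qfree (NegNumAt c i j) = True"
| "qfree (Rel R xs) = True"
| "qfree (NRel R xs) = True"
| "qfree (And \<phi> \<psi>) = (qfree \<phi> \<and> qfree \<psi>)"
| "qfree (Or \<phi> \<psi>) = (qfree \<phi> \<and> qfree \<psi>)"
| "qfree (Ex x \<phi>) = False"
| "qfree (All x \<phi>) = False"
| "qfree (ExF f k \<phi>) = False"

text \<open>Prenex with quantifier prefix in \<open>\<forall>*\<close>, resp. \<open>\<ddot>\<exists>*\<forall>*\<close>.\<close>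
fun univ_prenex :: "formula \<Rightarrow> bool" where
  "univ_prenex (All x \<phi>) = univ_prenex \<phi>"
| "univ_prenex \<phi> = qfree \<phi>"

fun ef_univ_prenex :: "formula \<Rightarrow> bool" where
  "ef_univ_prenex (ExF f k \<phi>) = ef_univ_prenex \<phi>"
| "ef_univ_prenex \<phi> = univ_prenex \<phi>"

text \<open>\<open>Struc_\<real>(\<phi>)\<close>: pairs (structure, assignment) satisfying \<phi>. Assignments are total
maps into the universe; only the values on free variables matter.\<close>
definition Struc_R :: "vocab \<Rightarrow> formula \<Rightarrow> (struc \<times> (var \<Rightarrow> nat)) set" where
  "Struc_R V \<phi> = {(S, s). is_struc V S \<and> (\<forall>x. s x \<in> univ S) \<and> sat_d S s \<phi>}"

definition leq_R :: "(formula \<Rightarrow> bool) \<Rightarrow> (formula \<Rightarrow> bool) \<Rightarrow> bool" where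
  "leq_R L L' \<longleftrightarrow>
     (\<forall>V \<phi>. finite_vocab V \<and> wf V \<phi> \<and> L \<phi> \<longrightarrow>
        (\<exists>\<psi>. wf V \<psi> \<and> L' \<psi> \<and> Struc_R V \<phi> = Struc_R V \<psi>))"

definition equiv_R :: "(formula \<Rightarrow> bool) \<Rightarrow> (formula \<Rightarrow> bool) \<Rightarrow> bool" where
  "equiv_R L L' \<longleftrightarrow> leq_R L L' \<and> leq_R L' L"

definition L_ESO_d :: "op set \<Rightarrow> cmp set \<Rightarrow> real set \<Rightarrow> formula \<Rightarrow> bool" where
  "L_ESO_d Ops E C \<phi> \<longleftrightarrow> in_ESO Ops E C \<phi> \<and> loose \<phi>"

end

theory Submission
  imports Defs
begin

primrec zt :: "nterm \<Rightarrow> bool" where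
  "zt (Const c) = (c = 0)"
| "zt (FApp f xs) = False"
| "zt (Plus i j) = False"
| "zt (Times i j) = False"
| "zt (Sum ys t) = zt t"

primrec trt :: "nat \<Rightarrow> nterm \<Rightarrow> nterm" where
  "trt f (Const c) = Sum [0] (FApp f [0])"
| "trt f (FApp g xs) = FApp g xs"
| "trt f (Plus i j) = Plus (trt f i) (trt f j)"
| "trt f (Times i j) = Times (trt f i) (trt f j)"
| "trt f (Sum ys t) = Sum ys (trt f t)"

primrec tvars :: "nterm \<Rightarrow> nat set" where
  "tvars (Const c) = {}"
| "tvars (FApp g xs) = set xs"
| "tvars (Plus i j) = tvars i \<union> tvars j"
| "tvars (Times i j) = tvars i \<union> tvars j"
| "tvars (Sum ys t) = set ys \<union> tvars t"

primrec tfn :: "nterm \<Rightarrow> nat set" where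
  "tfn (Const c) = {}"
| "tfn (FApp g xs) = {g}"
| "tfn (Plus i j) = tfn i \<union> tfn j"
| "tfn (Times i j) = tfn i \<union> tfn j"
| "tfn (Sum ys t) = tfn t"

primrec ffn :: "formula \<Rightarrow> nat set" where
  "ffn (Eq x y) = {}"
| "ffn (NEq x y) = {}"
| "ffn (NumAt c i j) = tfn i \<union> tfn j"
| "ffn (NegNumAt c i j) = tfn i \<union> tfn j"
| "ffn (Rel R xs) = {}"
| "ffn (NRel R xs) = {}"
| "ffn (And \<phi> \<psi>) = ffn \<phi> \<union> ffn \<psi>"
| "ffn (Or \<phi> \<psi>) = ffn \<phi> \<union> ffn \<psi>"
| "ffn (Ex x \<phi>) = ffn \<phi>"
| "ffn (All x \<phi>) = ffn \<phi>"
| "ffn (ExF f k \<phi>) = insert f (ffn \<phi>)"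

definition freshn :: "nat set \<Rightarrow> nat" where
  "freshn X = Suc (Max (insert 0 X))"

lemma freshn_notin: "finite X \<Longrightarrow> freshn X \<notin> X"
  unfolding freshn_def
  by (metis Max_ge finite_insert insertCI n_not_Suc_n le_antisym Suc_n_not_le_n)

lemma finite_tvars: "finite (tvars t)" by (induction t) auto
lemma finite_tfn: "finite (tfn t)" by (induction t) auto
lemma finite_ffn: "finite (ffn \<phi>)" by (induction \<phi>) (auto simp: finite_tfn)

definition tra :: "nat \<Rightarrow> nterm \<Rightarrow> nterm \<Rightarrow> formula" where
  "tra f i j = (if zt i \<and> zt j then Eq 0 0
     else if zt i then NumAt CEq (Sum [freshn (tvars (trt f j))] (trt f j)) (trt f j)
     else if zt j then NumAt CEq (Sum [freshn (tvars (trt f i))] (trt f i)) (trt f i)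
     else NumAt CEq (trt f i) (trt f j))"

primrec tr :: "nat \<Rightarrow> formula \<Rightarrow> formula" where
  "tr f (Eq x y) = Eq x y"
| "tr f (NEq x y) = NEq x y"
| "tr f (NumAt c i j) = tra f i j"
| "tr f (NegNumAt c i j) = NegNumAt c i j"
| "tr f (Rel R xs) = Rel R xs"
| "tr f (NRel R xs) = NRel R xs"
| "tr f (And \<phi> \<psi>) = And (tr f \<phi>) (tr f \<psi>)"
| "tr f (Or \<phi> \<psi>) = Or (tr f \<phi>) (tr f \<psi>)"
| "tr f (Ex x \<phi>) = Ex x (tr f \<phi>)"
| "tr f (All x \<phi>) = All x (tr f \<phi>)"
| "tr f (ExF g k \<phi>) = ExF g k (tr f \<phi>)"

lemma tuples1: "tuples A (Suc 0) = (\<lambda>a. [a]) ` A"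
  unfolding tuples_def
  by (auto simp: length_Suc_conv image_iff)

lemma card_tuples1: "card (tuples A (Suc 0)) = card A"
  by (simp add: tuples1 card_image inj_on_def)

lemma upd1: "upd s [y] [a] = s(y := a)"
  by (auto simp: upd_def)

lemma zt_eval: "zt t \<Longrightarrow> teval A F s t = 0"
  by (induction t arbitrary: s) auto

lemma sum_one:
  assumes "is_distr A 1 g"
  shows "(\<Sum>as\<in>tuples A 1. g (map (upd s [y] as) [y])) = 1"
proof -
  have "(\<Sum>as\<in>tuples A 1. g (map (upd s [y] as) [y])) = (\<Sum>as\<in>tuples A 1. g as)"
  proof (rule sum.cong)
    fix as assume "as \<in> tuples A 1"
    then obtain a where "as = [a]" by (auto simp: tuples1)
    then show "g (map (upd s [y] as) [y]) = g as" by (simp add: upd1)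
  qed simp
  also have "\<dots> = 1" using assms by (simp add: is_distr_def)
  finally show ?thesis .
qed

lemma trt_eval:
  assumes "is_distr A 1 (F f)"
  shows "term_in {OSum} {0,1} t \<Longrightarrow> \<not> zt t \<Longrightarrow> teval A F s (trt f t) = teval A F s t"
proof (induction t arbitrary: s)
  case (Const c)
  then show ?case using sum_one[OF assms] by auto
qed auto

lemma tvars_fresh: "y \<notin> tvars t \<Longrightarrow> teval A F (s(y := a)) t = teval A F s t"
proof (induction t arbitrary: s)
  case (FApp g xs)
  then show ?case by (auto intro!: arg_cong[where f="F g"])
next
  case (Sum ys t)
  have eq: "\<And>as. upd (s(y := a)) ys as = (upd s ys as)(y := a)"
    using Sum.prems by (auto simp: upd_def fun_eq_iff split: option.splits dest: map_of_SomeD in_set_zipE)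
  have "\<And>as. teval A F (upd (s(y := a)) ys as) t = teval A F (upd s ys as) t"
    unfolding eq by (rule Sum.IH) (use Sum.prems in simp)
  then show ?case by (simp only: teval.simps)
qed auto

lemma sum_fresh_eval:
  assumes "y \<notin> tvars t"
  shows "teval A F s (Sum [y] t) = real (card A) * teval A F s t"
proof -
  have "teval A F s (Sum [y] t) = (\<Sum>as\<in>tuples A (Suc 0). teval A F (upd s [y] as) t)"
    by simp
  also have "\<dots> = (\<Sum>as\<in>tuples A (Suc 0). teval A F s t)"
  proof (rule sum.cong)
    fix as assume "as \<in> tuples A (Suc 0)"
    then obtain a where "as = [a]" by (auto simp: tuples1)
    then show "teval A F (upd s [y] as) t = teval A F s t"
      by (simp add: upd1 tvars_fresh[OF assms])
  qed simp
  also have "\<dots> = real (card A) * teval A F s t" by (simp add: card_tuples1)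
  finally show ?thesis .
qed

lemma mult_self: "card A \<ge> 2 \<Longrightarrow> (real (card A) * v = v) = (v = 0)"
proof -
  assume "card A \<ge> 2"
  then have "real (card A) - 1 \<noteq> 0" by simp
  then show ?thesis by (metis eq_iff_diff_eq_0 left_diff_distrib' mult_cancel_right1 mult_zero_left no_zero_divisors)
qed

lemma zero_atom:
  assumes "card A \<ge> 2"
  shows "(teval A F s (Sum [freshn (tvars t)] t) = teval A F s t) = (teval A F s t = 0)"
proof -
  have fr: "freshn (tvars t) \<notin> tvars t" by (simp add: freshn_notin finite_tvars)
  show ?thesis unfolding sum_fresh_eval[OF fr] by (rule mult_self[OF assms])
qed

lemma tra_sem:
  assumes d: "is_distr (univ S) 1 (fn S f)" and c: "card (univ S) \<ge> 2"
    and ti: "term_in {OSum} {0,1} i" and tj: "term_in {OSum} {0,1} j"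
  shows "sat_d S s (tra f i j) = (teval (univ S) (fn S) s i = teval (univ S) (fn S) s j)"
proof -
  have ei: "\<not> zt i \<Longrightarrow> teval (univ S) (fn S) s (trt f i) = teval (univ S) (fn S) s i"
    using trt_eval[where F="fn S" and f=f, OF d ti] by blast
  have ej: "\<not> zt j \<Longrightarrow> teval (univ S) (fn S) s (trt f j) = teval (univ S) (fn S) s j"
    using trt_eval[where F="fn S" and f=f, OF d tj] by blast
  show ?thesis
  proof (cases "zt i")
    case zi: True
    show ?thesis
    proof (cases "zt j")
      case True then show ?thesis using zi by (simp add: tra_def zt_eval)
    next
      case False
      have "sat_d S s (tra f i j) = (teval (univ S) (fn S) s (trt f j) = 0)"
        using zi False by (simp only: tra_def if_True if_False simp_thms sat_d.simps cmp_sem.simps zero_atom[OF c])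
      then show ?thesis using ej False zi zt_eval[OF zi] by auto
    qed
  next
    case zi: False
    show ?thesis
    proof (cases "zt j")
      case True
      have "sat_d S s (tra f i j) = (teval (univ S) (fn S) s (trt f i) = 0)"
        using zi True by (simp only: tra_def if_True if_False simp_thms sat_d.simps cmp_sem.simps zero_atom[OF c])
      then show ?thesis using ei True zi zt_eval[OF True] by auto
    next
      case False
      then show ?thesis using zi ei ej by (simp add: tra_def)
    qed
  qed
qed

lemma tr_sem:
  "in_ESO {OSum} {CEq} {0,1} \<phi> \<Longrightarrow> loose \<phi> \<Longrightarrow> f \<notin> ffn \<phi> \<Longrightarrow>
   is_distr (univ S) 1 (fn S f) \<Longrightarrow> card (univ S) \<ge> 2 \<Longrightarrow>
   sat_d S s (tr f \<phi>) = sat_d S s \<phi>"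
proof (induction \<phi> arbitrary: S s)
  case (NumAt c i j)
  then show ?case using tra_sem[of S f i j s] by auto
next
  case (ExF g k \<phi>)
  have "\<And>h. sat_d (S\<lparr>fn := (fn S)(g := h)\<rparr>) s (tr f \<phi>) = sat_d (S\<lparr>fn := (fn S)(g := h)\<rparr>) s \<phi>"
    using ExF by (intro ExF.IH) auto
  then show ?case by simp
qed auto

lemma teval_indep:
  "(\<forall>h. h \<noteq> f \<longrightarrow> F h = F' h) \<Longrightarrow> f \<notin> tfn t \<Longrightarrow> teval A F s t = teval A F' s t"
  by (induction t arbitrary: s) auto

lemma sat_indep:
  "univ S = univ S' \<Longrightarrow> rel S = rel S' \<Longrightarrow> (\<forall>h. h \<noteq> f \<longrightarrow> fn S h = fn S' h) \<Longrightarrow>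
   f \<notin> ffn \<phi> \<Longrightarrow> sat_d S s \<phi> = sat_d S' s \<phi>"
proof (induction \<phi> arbitrary: S S' s)
  case (NumAt c i j)
  then show ?case using teval_indep[of f "fn S" "fn S'"] by simp
next
  case (NegNumAt c i j)
  then show ?case using teval_indep[of f "fn S" "fn S'"] by simp
next
  case (Ex x \<phi>)
  have e: "\<And>s. sat_d S s \<phi> = sat_d S' s \<phi>" by (rule Ex.IH) (use Ex.prems in simp_all)
  show ?case using e Ex.prems(1) by (simp only: sat_d.simps)
next
  case (All x \<phi>)
  have e: "\<And>s. sat_d S s \<phi> = sat_d S' s \<phi>" by (rule All.IH) (use All.prems in simp_all)
  show ?case using e All.prems(1) by (simp only: sat_d.simps)
next
  case (ExF g k \<phi>)
  have "\<And>h. sat_d (S\<lparr>fn := (fn S)(g := h)\<rparr>) s \<phi> = sat_d (S'\<lparr>fn := (fn S')(g := h)\<rparr>) s \<phi>"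
    using ExF.prems by (intro ExF.IH) auto
  then show ?case using ExF.prems by simp
next
  case (And \<phi>1 \<phi>2)
  have e1: "sat_d S s \<phi>1 = sat_d S' s \<phi>1" by (rule And.IH(1)) (use And.prems in simp_all)
  have e2: "sat_d S s \<phi>2 = sat_d S' s \<phi>2" by (rule And.IH(2)) (use And.prems in simp_all)
  show ?case using e1 e2 by (simp only: sat_d.simps)
next
  case (Or \<phi>1 \<phi>2)
  have e1: "sat_d S s \<phi>1 = sat_d S' s \<phi>1" by (rule Or.IH(1)) (use Or.prems in simp_all)
  have e2: "sat_d S s \<phi>2 = sat_d S' s \<phi>2" by (rule Or.IH(2)) (use Or.prems in simp_all)
  show ?case using e1 e2 by (simp only: sat_d.simps)
qed simp_all

lemma distr_exists:
  assumes "finite A" "card A \<ge> 2"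
  shows "\<exists>g. is_distr A 1 g"
proof -
  define g where "g = (\<lambda>v. if v \<in> tuples A 1 then 1 / real (card A) else 0)"
  have "(\<Sum>v\<in>tuples A 1. g v) = real (card (tuples A 1)) * (1 / real (card A))"
    by (simp add: g_def)
  also have "\<dots> = 1"
  proof -
    have "card (tuples A 1) = card A" using card_tuples1[of A] by simp
    moreover have "card A > 0" using assms by simp
    ultimately show ?thesis by simp
  qed
  finally have "is_distr A 1 g" unfolding is_distr_def g_def by auto
  then show ?thesis by blast
qed

lemma wf_trt: "wf_term ar t \<Longrightarrow> ar f = Some 1 \<Longrightarrow> wf_term ar (trt f t)"
  by (induction t) auto

lemma wf_term_upd: "wf_term ar t \<Longrightarrow> f \<notin> tfn t \<Longrightarrow> wf_term (ar(f := x)) t"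
  by (induction t) auto

lemma wf_tr: "wf_form rv ar \<phi> \<Longrightarrow> f \<notin> ffn \<phi> \<Longrightarrow> wf_form rv (ar(f := Some 1)) (tr f \<phi>)"
proof (induction \<phi> arbitrary: ar)
  case (NumAt c i j)
  then have "wf_term (ar(f := Some 1)) i" "wf_term (ar(f := Some 1)) j"
    by (auto intro: wf_term_upd)
  moreover have w: "\<And>t. wf_term (ar(f := Some 1)) t \<Longrightarrow> wf_term (ar(f := Some 1)) (trt f t)"
    by (rule wf_trt) simp_all
  ultimately show ?case unfolding tr.simps tra_def by (simp only: wf_form.simps wf_term.simps w distinct_singleton split: if_split) simp
next
  case (ExF g k \<phi>)
  have "wf_form rv ((ar(g := Some k))(f := Some 1)) (tr f \<phi>)"
    by (rule ExF.IH) (use ExF.prems in \<open>simp_all del: fun_upd_apply\<close>)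
  moreover have "(ar(g := Some k))(f := Some 1) = (ar(f := Some 1))(g := Some k)"
    using ExF.prems by auto
  ultimately show ?case by (simp del: fun_upd_apply)
qed (auto intro: wf_term_upd)

lemma term_in_trt: "term_in {OSum} C t \<Longrightarrow> term_in {OSum} {} (trt f t)"
  by (induction t) auto

lemma tr_ESO: "in_ESO {OSum} {CEq} C \<phi> \<Longrightarrow> loose \<phi> \<Longrightarrow> in_ESO {OSum} {CEq} {} (tr f \<phi>) \<and> loose (tr f \<phi>)"
  by (induction \<phi>) (auto simp: tra_def term_in_trt)

lemma has_num_tr: "has_num (tr f \<phi>) \<Longrightarrow> has_num \<phi>"
  by (induction \<phi>) (auto simp: tra_def)

lemma ac_tr: "almost_conj \<phi> \<Longrightarrow> almost_conj (tr f \<phi>)"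
  by (induction \<phi>) (auto simp: tra_def dest: has_num_tr)

lemma qfree_tr: "qfree (tr f \<phi>) = qfree \<phi>"
  by (induction \<phi>) (auto simp: tra_def)

lemma up_tr: "univ_prenex (tr f \<phi>) = univ_prenex \<phi>"
  by (induction \<phi>) (auto simp: tra_def qfree_tr)

lemma eup_tr: "ef_univ_prenex (tr f \<phi>) = ef_univ_prenex \<phi>"
  by (induction \<phi>) (auto simp: tra_def up_tr qfree_tr)

lemma in_ESO_mono: "in_ESO Ops E {} \<phi> \<Longrightarrow> in_ESO Ops E C \<phi>"
proof -
  have "term_in Ops {} t \<Longrightarrow> term_in Ops C t" for t by (induction t) auto
  then show "in_ESO Ops E {} \<phi> \<Longrightarrow> in_ESO Ops E C \<phi>" by (induction \<phi>) auto
qed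

lemma Struc_tr:
  assumes "L_ESO_d {OSum} {CEq} {0,1} \<phi>"
  defines "f \<equiv> freshn (ffn \<phi>)"
  shows "Struc_R V \<phi> = Struc_R V (ExF f 1 (tr f \<phi>))"
proof -
  have fn: "f \<notin> ffn \<phi>" unfolding f_def by (simp add: freshn_notin finite_ffn)
  have "sat_d S s (ExF f 1 (tr f \<phi>)) = sat_d S s \<phi>" if st: "is_struc V S" for S s
  proof -
    have fin: "finite (univ S)" and c2: "card (univ S) \<ge> 2" using st by (auto simp: is_struc_def)
    have "sat_d S s (ExF f 1 (tr f \<phi>)) =
       (\<exists>g. is_distr (univ S) 1 g \<and> sat_d (S\<lparr>fn := (fn S)(f := g)\<rparr>) s \<phi>)"
      using tr_sem[of \<phi> f] assms(1) fn c2 by (auto simp: L_ESO_d_def)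
    also have "\<dots> = (\<exists>g. is_distr (univ S) 1 g \<and> sat_d S s \<phi>)"
      using sat_indep[of "S\<lparr>fn := (fn S)(f := g)\<rparr>" S f \<phi> s for g] fn by auto
    also have "\<dots> = sat_d S s \<phi>" using distr_exists[OF fin c2] by auto
    finally show ?thesis .
  qed
  then show ?thesis unfolding Struc_R_def by auto
qed

lemma leq1: "leq_R (L_ESO_d {OSum} {CEq} {}) (L_ESO_d {OSum} {CEq} {0, 1})"
  unfolding leq_R_def L_ESO_d_def using in_ESO_mono by blast

lemma leq1': "leq_R (\<lambda>\<phi>. L_ESO_d {OSum} {CEq} {} \<phi> \<and> almost_conj \<phi> \<and> ef_univ_prenex \<phi>)
              (\<lambda>\<phi>. L_ESO_d {OSum} {CEq} {0, 1} \<phi> \<and> almost_conj \<phi> \<and> ef_univ_prenex \<phi>)"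
  unfolding leq_R_def L_ESO_d_def using in_ESO_mono by blast

lemma wf_ex: "wf V \<phi> \<Longrightarrow> wf V (ExF (freshn (ffn \<phi>)) 1 (tr (freshn (ffn \<phi>)) \<phi>))"
  unfolding wf_def wf_form.simps by (rule wf_tr) (simp_all add: freshn_notin finite_ffn)

lemma leq2: "leq_R (L_ESO_d {OSum} {CEq} {0, 1}) (L_ESO_d {OSum} {CEq} {})"
  unfolding leq_R_def
proof (intro allI impI)
  fix V \<phi> assume h: "finite_vocab V \<and> wf V \<phi> \<and> L_ESO_d {OSum} {CEq} {0, 1} \<phi>"
  let ?f = "freshn (ffn \<phi>)"
  show "\<exists>\<psi>. wf V \<psi> \<and> L_ESO_d {OSum} {CEq} {} \<psi> \<and> Struc_R V \<phi> = Struc_R V \<psi>"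
    apply (rule exI[of _ "ExF ?f 1 (tr ?f \<phi>)"])
    using h wf_ex Struc_tr tr_ESO by (auto simp: L_ESO_d_def)
qed

lemma leq2': "leq_R (\<lambda>\<phi>. L_ESO_d {OSum} {CEq} {0, 1} \<phi> \<and> almost_conj \<phi> \<and> ef_univ_prenex \<phi>)
   (\<lambda>\<phi>. L_ESO_d {OSum} {CEq} {} \<phi> \<and> almost_conj \<phi> \<and> ef_univ_prenex \<phi>)"
  unfolding leq_R_def
proof (intro allI impI)
  fix V \<phi> assume h: "finite_vocab V \<and> wf V \<phi> \<and> (L_ESO_d {OSum} {CEq} {0, 1} \<phi> \<and> almost_conj \<phi> \<and> ef_univ_prenex \<phi>)"
  let ?f = "freshn (ffn \<phi>)"
  show "\<exists>\<psi>. wf V \<psi> \<and> (L_ESO_d {OSum} {CEq} {} \<psi> \<and> almost_conj \<psi> \<and> ef_univ_prenex \<psi>) \<and> Struc_R V \<phi> = Struc_R V \<psi>"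
    apply (rule exI[of _ "ExF ?f 1 (tr ?f \<phi>)"])
    using h wf_ex Struc_tr tr_ESO ac_tr eup_tr by (auto simp: L_ESO_d_def)
qed

theorem mainTheorem7:
  shows "equiv_R (L_ESO_d {OSum} {CEq} {}) (L_ESO_d {OSum} {CEq} {0, 1})
    \<and> equiv_R (\<lambda>\<phi>. L_ESO_d {OSum} {CEq} {} \<phi> \<and> almost_conj \<phi> \<and> ef_univ_prenex \<phi>)
              (\<lambda>\<phi>. L_ESO_d {OSum} {CEq} {0, 1} \<phi> \<and> almost_conj \<phi> \<and> ef_univ_prenex \<phi>)"
  unfolding equiv_R_def using leq1 leq1' leq2 leq2' by blast

end
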